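(* Let $\mathcal{M}\subset\mathbb{R}^n$ be a locally symmetric $C^2$ submanifold. If for some $\bar x\in\mathcal{M}$, $\sigma\in\Sigma^n$ and $\delta>0$ we have $\mathcal{M}\cap B(\bar x,\delta)\subseteq\Delta(\sigma)$, then $$\mathcal{M}\subseteq\Delta(\sigma)^{\perp\perp}\setminus\bigcup_{\sigma'\prec\prec\sigma}\Delta(\sigma').$$
   Context: $\Sigma^n$ permutations of $\mathbb{N}_n$ acting by $(\sigma x)_i=x_{\sigma^{-1}(i)}$; $P(\sigma)$ orbit partition; $P(x)$ partition by equal coordinates; $\Delta(\sigma)=\{x:P(x)=P(\sigma)\}$; $\Delta(\sigma)^{\perp\perp}=\{x:x_i=x_j$ whenever $i,j$ lie in the same set of $P(\sigma)\}$. $\sigma'\prec\sigma$ means $P(\sigma)$ refines $P(\sigma')$ (every set of $P(\sigma')$ is a union of sets of $P(\sigma)$) and $P(\sigma')\ne P(\sigma)$. $\sigma'\prec\prec\sigma$ ("much smaller") means $\sigma'\prec\sigma$ and some set of $P(\sigma')$ is the union of at least two sets of $P(\sigma)$, at least one of which has at least two elements. $\mathbb{R}^n_\ge=\{x:x_1\ge\cdots\ge x_n\}$; $B$ open ball. A set $S$ is locally symmetric if $S\cap\mathbb{R}^n_\ge\ne\emptyset$ and each $x\in S$ has $\delta>0$ with $\sigma(S\cap B(x,\delta))=S\cap B(x,\delta)$ for all $y\in S\cap B(x,\delta)$, all $\sigma$ with $\sigma y=y$. A locally symmetric $C^2$ submanifold is a connected $C^2$ submanifold without boundary which is locally symmetric.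 *)

theory Defs
  imports "HOL-Analysis.Analysis"
begin

text \<open>Vectors in R^n are modelled as real^'n with a finite, linearly ordered
index type 'n (the order gives the coordinate order 1 < ... < n).\<close>

definition perm_act :: "('n \<Rightarrow> 'n) \<Rightarrow> real^'n \<Rightarrow> real^'n" where
  "perm_act \<sigma> x = (\<chi> i. x $ (inv \<sigma> i))"

definition orbit_partition :: "('n \<Rightarrow> 'n) \<Rightarrow> 'n set set" where
  "orbit_partition \<sigma> = range (\<lambda>i. {j. \<exists>k::nat. (\<sigma> ^^ k) i = j})"

definition coord_partition :: "real^'n \<Rightarrow> 'n set set" where
  "coord_partition x = range (\<lambda>i. {j. x $ j = x $ i})"

definition Delta :: "('n \<Rightarrow> 'n) \<Rightarrow> (real^'n) set" where
  "Delta \<sigma> = {x. coord_partition x = orbit_partition \<sigma>}"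

definition Delta_perpperp :: "('n \<Rightarrow> 'n) \<Rightarrow> (real^'n) set" where
  "Delta_perpperp \<sigma> = {x. \<forall>B\<in>orbit_partition \<sigma>. \<forall>i\<in>B. \<forall>j\<in>B. x $ i = x $ j}"

definition refines :: "'a set set \<Rightarrow> 'a set set \<Rightarrow> bool" where
  "refines P Q \<longleftrightarrow> (\<forall>B\<in>Q. \<exists>C\<subseteq>P. B = \<Union>C)"

definition perm_prec :: "('n \<Rightarrow> 'n) \<Rightarrow> ('n \<Rightarrow> 'n) \<Rightarrow> bool" where
  "perm_prec \<sigma>' \<sigma> \<longleftrightarrow> refines (orbit_partition \<sigma>) (orbit_partition \<sigma>')
      \<and> orbit_partition \<sigma>' \<noteq> orbit_partition \<sigma>"

definition perm_much_smaller :: "('n \<Rightarrow> 'n) \<Rightarrow> ('n \<Rightarrow> 'n) \<Rightarrow> bool" where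
  "perm_much_smaller \<sigma>' \<sigma> \<longleftrightarrow> perm_prec \<sigma>' \<sigma> \<and>
     (\<exists>B\<in>orbit_partition \<sigma>'. \<exists>C\<subseteq>orbit_partition \<sigma>.
        B = \<Union>C \<and> card C \<ge> 2 \<and> (\<exists>A\<in>C. card A \<ge> 2))"

definition ordered_cone :: "(real^'n::{finite,linorder}) set" where
  "ordered_cone = {x. \<forall>i j. i \<le> j \<longrightarrow> x $ j \<le> x $ i}"

definition locally_symmetric :: "(real^'n::{finite,linorder}) set \<Rightarrow> bool" where
  "locally_symmetric S \<longleftrightarrow> S \<inter> ordered_cone \<noteq> {} \<and>
     (\<forall>x\<in>S. \<exists>\<delta>>0. \<forall>y\<in>S \<inter> ball x \<delta>. \<forall>\<sigma>. \<sigma> permutes UNIV \<and> perm_act \<sigma> y = y \<longrightarrow>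
        perm_act \<sigma> ` (S \<inter> ball x \<delta>) = S \<inter> ball x \<delta>)"

definition C2_on :: "'a::euclidean_space set \<Rightarrow> ('a \<Rightarrow> 'b::euclidean_space) \<Rightarrow> bool" where
  "C2_on U f \<longleftrightarrow> open U \<and> (\<exists>f' f''.
     (\<forall>x\<in>U. (f has_derivative blinfun_apply (f' x)) (at x)) \<and>
     (\<forall>x\<in>U. (f' has_derivative blinfun_apply (f'' x)) (at x)) \<and>
     continuous_on U f'')"

definition C2_submanifold :: "'a::euclidean_space set \<Rightarrow> bool" where
  "C2_submanifold S \<longleftrightarrow> connected S \<and>
     (\<forall>x\<in>S. \<exists>U (\<Phi>::'a \<Rightarrow> 'a) L. open U \<and> x \<in> U \<and> inj_on \<Phi> U \<and> open (\<Phi> ` U) \<and>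
        C2_on U \<Phi> \<and> C2_on (\<Phi> ` U) (the_inv_into U \<Phi>) \<and>
        subspace L \<and> \<Phi> ` (S \<inter> U) = L \<inter> \<Phi> ` U)"

definition locally_symmetric_C2_submanifold :: "(real^'n::{finite,linorder}) set \<Rightarrow> bool" where
  "locally_symmetric_C2_submanifold M \<longleftrightarrow> C2_submanifold M \<and> locally_symmetric M"

end

theory Submission
  imports Defs
begin


definition orb :: "('n \<Rightarrow> 'n) \<Rightarrow> 'n \<Rightarrow> 'n set" where
  "orb \<sigma> i = {j. \<exists>k::nat. (\<sigma> ^^ k) i = j}"

lemma orbit_partition_orb: "orbit_partition \<sigma> = range (orb \<sigma>)"
  unfolding orbit_partition_def orb_def by simp

lemma orb_self: "i \<in> orb \<sigma> i"
  unfolding orb_def by (auto intro: exI[of _ 0])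

lemma orb_finite: "finite (orb (\<sigma>::'n::finite\<Rightarrow>'n) i)" by simp

lemma orb_image:
  fixes \<sigma> :: "'n::finite \<Rightarrow> 'n"
  assumes "\<sigma> permutes UNIV" shows "\<sigma> ` orb \<sigma> i = orb \<sigma> i"
proof (rule endo_inj_surj)
  show "\<sigma> ` orb \<sigma> i \<subseteq> orb \<sigma> i"
  proof
    fix y assume "y \<in> \<sigma> ` orb \<sigma> i"
    then obtain k where "y = \<sigma> ((\<sigma>^^k) i)" unfolding orb_def by auto
    then have "y = (\<sigma>^^Suc k) i" by simp
    then show "y \<in> orb \<sigma> i" unfolding orb_def by blast
  qed
  show "inj_on \<sigma> (orb \<sigma> i)" using assms permutes_inj inj_on_subset by blast
qed simp

lemma orb_inv_image:
  fixes \<sigma> :: "'n::finite \<Rightarrow> 'n"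
  assumes "\<sigma> permutes UNIV" shows "inv \<sigma> ` orb \<sigma> i = orb \<sigma> i"
proof -
  have "inv \<sigma> ` (\<sigma> ` orb \<sigma> i) = orb \<sigma> i"
    using permutes_inverses(2)[OF assms] by (simp add: image_image)
  then show ?thesis using orb_image[OF assms] by simp
qed

lemma orb_inv_mem:
  fixes \<sigma> :: "'n::finite \<Rightarrow> 'n"
  assumes "\<sigma> permutes UNIV" "j \<in> orb \<sigma> i" shows "inv \<sigma> j \<in> orb \<sigma> i"
  using orb_inv_image[OF assms(1)] assms(2) by blast

lemma orb_inv_pow:
  fixes \<sigma> :: "'n::finite \<Rightarrow> 'n"
  assumes "\<sigma> permutes UNIV" shows "(inv \<sigma> ^^ k) j \<in> orb \<sigma> j"
  by (induction k) (auto simp: orb_self intro: orb_inv_mem[OF assms])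

lemma inv_pow_cancel:
  fixes \<sigma> :: "'n::finite \<Rightarrow> 'n"
  assumes "\<sigma> permutes UNIV" shows "(inv \<sigma> ^^ k) ((\<sigma> ^^ k) i) = i"
proof (induction k arbitrary: i)
  case (Suc k)
  have "(inv \<sigma> ^^ Suc k) ((\<sigma> ^^ Suc k) i) = (inv \<sigma> ^^ k) (inv \<sigma> ((\<sigma> ^^ k) (\<sigma> i)))"
    by (simp add: funpow_Suc_right funpow_swap1)
  also have "\<dots> = (inv \<sigma> ^^ k) (inv \<sigma> (\<sigma> ((\<sigma> ^^ k) i)))"
    by (simp add: funpow_swap1)
  also have "\<dots> = i" using permutes_inverses(2)[OF assms] Suc by simp
  finally show ?case .
qed simp

lemma orb_sym:
  fixes \<sigma> :: "'n::finite \<Rightarrow> 'n"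
  assumes "\<sigma> permutes UNIV" "j \<in> orb \<sigma> i" shows "i \<in> orb \<sigma> j"
proof -
  obtain k where "(\<sigma> ^^ k) i = j" using assms(2) unfolding orb_def by auto
  then show ?thesis using orb_inv_pow[OF assms(1), of k j] inv_pow_cancel[OF assms(1), of k i] by simp
qed

lemma orb_trans:
  assumes "j \<in> orb \<sigma> i" "l \<in> orb \<sigma> j" shows "l \<in> orb \<sigma> i"
proof -
  obtain k where k: "(\<sigma> ^^ k) i = j" using assms(1) unfolding orb_def by auto
  obtain m where m: "(\<sigma> ^^ m) j = l" using assms(2) unfolding orb_def by auto
  have "(\<sigma> ^^ (m + k)) i = l" using k m by (simp add: funpow_add)
  then show ?thesis unfolding orb_def by blast
qed

lemma orb_eq:
  fixes \<sigma> :: "'n::finite \<Rightarrow> 'n"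
  assumes "\<sigma> permutes UNIV" "j \<in> orb \<sigma> i" shows "orb \<sigma> j = orb \<sigma> i"
proof (rule set_eqI)
  fix l
  have "i \<in> orb \<sigma> j" using orb_sym[OF assms] .
  then show "l \<in> orb \<sigma> j \<longleftrightarrow> l \<in> orb \<sigma> i"
    using orb_trans[of j \<sigma> i l] orb_trans[of i \<sigma> j l] assms(2) by blast
qed

lemma perm_act_fix_iff:
  fixes \<sigma> :: "'n::finite \<Rightarrow> 'n"
  assumes "\<sigma> permutes UNIV"
  shows "perm_act \<sigma> x = x \<longleftrightarrow> (\<forall>j. x $ (\<sigma> j) = x $ j)"
proof
  assume h: "perm_act \<sigma> x = x"
  show "\<forall>j. x $ (\<sigma> j) = x $ j"
  proof
    fix j
    have "x $ (inv \<sigma> (\<sigma> j)) = x $ (\<sigma> j)"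
      using h unfolding perm_act_def by (metis vec_lambda_beta)
    then show "x $ (\<sigma> j) = x $ j" using permutes_inverses(2)[OF assms] by simp
  qed
next
  assume h: "\<forall>j. x $ (\<sigma> j) = x $ j"
  show "perm_act \<sigma> x = x" unfolding perm_act_def vec_eq_iff
    using h permutes_inverses(1)[OF assms] by (metis vec_lambda_beta)
qed

lemma fix_pow:
  assumes "\<forall>j. x $ (\<sigma> j) = x $ j" shows "x $ ((\<sigma> ^^ k) i) = x $ i"
  using assms by (induction k) auto

lemma Delta_perpperp_iff:
  fixes \<sigma> :: "'n::finite \<Rightarrow> 'n"
  assumes "\<sigma> permutes UNIV"
  shows "x \<in> Delta_perpperp \<sigma> \<longleftrightarrow> perm_act \<sigma> x = x"
proof
  assume "x \<in> Delta_perpperp \<sigma>"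
  then have h0: "\<forall>B\<in>orbit_partition \<sigma>. \<forall>i\<in>B. \<forall>j\<in>B. x $ i = x $ j"
    unfolding Delta_perpperp_def by (rule CollectD)
  have h: "\<forall>l. \<forall>i\<in>orb \<sigma> l. \<forall>j\<in>orb \<sigma> l. x $ i = x $ j"
  proof (intro allI ballI)
    fix l i j assume "i \<in> orb \<sigma> l" "j \<in> orb \<sigma> l"
    moreover have "orb \<sigma> l \<in> orbit_partition \<sigma>" unfolding orbit_partition_orb by (rule rangeI)
    ultimately show "x $ i = x $ j" using h0 by blast
  qed
  have "\<forall>j. x $ (\<sigma> j) = x $ j"
  proof
    fix j
    have "\<sigma> j \<in> orb \<sigma> j" unfolding orb_def by (auto intro!: exI[of _ 1])
    then show "x $ (\<sigma> j) = x $ j" using h[rule_format, OF _ orb_self[of j \<sigma>]] by blast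
  qed
  then show "perm_act \<sigma> x = x" using perm_act_fix_iff[OF assms] by blast
next
  assume "perm_act \<sigma> x = x"
  then have h: "\<forall>j. x $ (\<sigma> j) = x $ j" using perm_act_fix_iff[OF assms] by blast
  have eq: "x $ i = x $ l" if il: "i \<in> orb \<sigma> l" for i l
  proof -
    obtain k where "(\<sigma> ^^ k) l = i" using il unfolding orb_def by blast
    then show ?thesis using fix_pow[OF h, of k l] by simp
  qed
  show "x \<in> Delta_perpperp \<sigma>"
    unfolding Delta_perpperp_def orbit_partition_orb
  proof (intro CollectI ballI)
    fix B i j assume "B \<in> range (orb \<sigma>)" "i \<in> B" "j \<in> B"
    then obtain l where "B = orb \<sigma> l" by blast
    then show "x $ i = x $ j" using eq \<open>i \<in> B\<close> \<open>j \<in> B\<close> by metis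
  qed
qed

lemma linear_perm_act: "linear (perm_act \<sigma>)"
  by (rule linearI) (auto simp: perm_act_def vec_eq_iff)

lemma norm_perm_act:
  fixes \<sigma> :: "'n::finite \<Rightarrow> 'n"
  assumes "\<sigma> permutes UNIV" shows "norm (perm_act \<sigma> x) = norm x"
proof -
  have b: "bij_betw (inv \<sigma>) UNIV UNIV" using permutes_inv[OF assms] permutes_imp_bij by blast
  have "(\<Sum>i\<in>UNIV. (norm (x $ (inv \<sigma> i)))\<^sup>2) = (\<Sum>i\<in>UNIV. (norm (x $ i))\<^sup>2)"
    using sum.reindex_bij_betw[OF b, of "\<lambda>i. (norm (x $ i))\<^sup>2"] by simp
  then show ?thesis unfolding norm_vec_def L2_set_def perm_act_def by simp
qed

definition Pm :: "('n::finite \<Rightarrow> 'n) \<Rightarrow> real^'n \<Rightarrow> real^'n" where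
  "Pm \<sigma> x = (\<chi> i. (\<Sum>j\<in>orb \<sigma> i. x $ j) / real (card (orb \<sigma> i)))"

lemma linear_Pm: "linear (Pm \<sigma>)"
  by (rule linearI) (auto simp: Pm_def vec_eq_iff sum.distrib sum_distrib_left add_divide_distrib)

lemma Pm_perm:
  fixes \<sigma> :: "'n::finite \<Rightarrow> 'n"
  assumes "\<sigma> permutes UNIV" shows "Pm \<sigma> (perm_act \<sigma> x) = Pm \<sigma> x"
proof -
  have "(\<Sum>j\<in>orb \<sigma> i. x $ (inv \<sigma> j)) = (\<Sum>j\<in>orb \<sigma> i. x $ j)" for i
  proof -
    have "inj_on (inv \<sigma>) (orb \<sigma> i)"
      using permutes_inj[OF permutes_inv[OF assms]] inj_on_subset by blast
    then have "(\<Sum>j\<in>inv \<sigma> ` orb \<sigma> i. x $ j) = (\<Sum>j\<in>orb \<sigma> i. x $ (inv \<sigma> j))"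
      by (simp add: sum.reindex)
    then show ?thesis using orb_inv_image[OF assms] by simp
  qed
  then show ?thesis unfolding Pm_def perm_act_def by simp
qed

lemma Pm_fix:
  fixes \<sigma> :: "'n::finite \<Rightarrow> 'n"
  assumes "\<sigma> permutes UNIV" "perm_act \<sigma> x = x" shows "Pm \<sigma> x = x"
proof -
  have h: "\<forall>j. x $ (\<sigma> j) = x $ j" using perm_act_fix_iff[OF assms(1)] assms(2) by blast
  have "(\<Sum>j\<in>orb \<sigma> i. x $ j) = (\<Sum>j\<in>orb \<sigma> i. x $ i)" for i
    by (rule sum.cong) (auto simp: orb_def fix_pow[OF h])
  moreover have "card (orb \<sigma> i) > 0" for i using orb_self[of i \<sigma>] card_gt_0_iff by fastforce
  ultimately show ?thesis unfolding Pm_def vec_eq_iff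
    by simp (metis empty_iff orb_self)
qed



lemma core:
  fixes M :: "(real^'n::{finite,linorder}) set" and \<sigma> :: "'n::{finite,linorder} \<Rightarrow> 'n" and p :: "real^'n::{finite,linorder}"
  assumes C2: "C2_submanifold M" and LS: "locally_symmetric M" and sp: "\<sigma> permutes UNIV"
    and pM: "p \<in> M"
    and appr: "\<And>e. e > 0 \<Longrightarrow> \<exists>a\<in>M. dist a p < e \<and> (\<exists>\<epsilon>>0. M \<inter> ball a \<epsilon> \<subseteq> {x. perm_act \<sigma> x = x})"
  shows "\<exists>\<epsilon>>0. M \<inter> ball p \<epsilon> \<subseteq> {x. perm_act \<sigma> x = x}"
proof -
  define V where "V = {x. perm_act \<sigma> x = x}"
  define K where "K = (\<lambda>z. perm_act \<sigma> z - z)"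
  have linK: "linear K" unfolding K_def
    by (rule linearI) (auto simp: perm_act_def vec_eq_iff algebra_simps)
  have blK: "bounded_linear K" using linK linear_conv_bounded_linear by blast
  have contK: "continuous_on UNIV K" using linK linear_continuous_on linear_conv_bounded_linear by blast
  have V_K: "V = {x. K x = 0}" unfolding V_def K_def by auto
  have closedV: "closed V" unfolding V_K using contK by (simp add: closed_Collect_eq)
  obtain U and \<Phi> :: "real^'n::{finite,linorder} \<Rightarrow> real^'n::{finite,linorder}" and L where U: "open U" "p \<in> U" "inj_on \<Phi> U" "open (\<Phi> ` U)" "C2_on U \<Phi>"
     "C2_on (\<Phi> ` U) (the_inv_into U \<Phi>)" "subspace L" "\<Phi> ` (M \<inter> U) = L \<inter> \<Phi> ` U"
  proof -
    have "\<forall>x\<in>M. \<exists>U (\<Phi>::real^'n::{finite,linorder} \<Rightarrow> real^'n::{finite,linorder}) L. open U \<and> x \<in> U \<and> inj_on \<Phi> U \<and> open (\<Phi> ` U) \<and>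
        C2_on U \<Phi> \<and> C2_on (\<Phi> ` U) (the_inv_into U \<Phi>) \<and>
        subspace L \<and> \<Phi> ` (M \<inter> U) = L \<inter> \<Phi> ` U"
      using C2 unfolding C2_submanifold_def by (rule conjunct2)
    from bspec[OF this pM] show ?thesis by (elim exE conjE) (rule that; assumption)
  qed
  define W where "W = \<Phi> ` U"
  define \<iota> where "\<iota> = the_inv_into U \<Phi>"
  obtain \<Phi>' where \<Phi>d: "\<And>x. x \<in> U \<Longrightarrow> (\<Phi> has_derivative blinfun_apply (\<Phi>' x)) (at x)"
    using U(5) unfolding C2_on_def by blast
  obtain \<iota>' \<iota>'' where \<iota>d: "\<And>y. y \<in> W \<Longrightarrow> (\<iota> has_derivative blinfun_apply (\<iota>' y)) (at y)"
    and \<iota>d2: "\<And>y. y \<in> W \<Longrightarrow> (\<iota>' has_derivative blinfun_apply (\<iota>'' y)) (at y)"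
    using U(6) unfolding C2_on_def W_def \<iota>_def by blast
  have openW: "open W" using U(4) W_def by simp
  have \<iota>'cont: "continuous_on W \<iota>'"
    using \<iota>d2 has_derivative_continuous continuous_at_imp_continuous_on by blast
  have \<iota>cont: "\<And>y. y \<in> W \<Longrightarrow> continuous (at y) \<iota>"
    using \<iota>d has_derivative_continuous by blast
  have \<Phi>cont: "\<And>x. x \<in> U \<Longrightarrow> continuous (at x) \<Phi>"
    using \<Phi>d has_derivative_continuous by blast
  have \<iota>\<Phi>: "\<And>x. x \<in> U \<Longrightarrow> \<iota> (\<Phi> x) = x"
    unfolding \<iota>_def using U(3) the_inv_into_f_f by metis
  have \<Phi>\<iota>: "\<And>y. y \<in> W \<Longrightarrow> \<Phi> (\<iota> y) = y"
    unfolding \<iota>_def W_def using U(3) f_the_inv_into_f by metis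
  have \<iota>U: "\<And>y. y \<in> W \<Longrightarrow> \<iota> y \<in> U"
    unfolding \<iota>_def W_def using U(3) the_inv_into_into by (metis order_refl)
  have LW_M: "\<And>y. y \<in> L \<Longrightarrow> y \<in> W \<Longrightarrow> \<iota> y \<in> M"
  proof -
    fix y assume "y \<in> L" "y \<in> W"
    then obtain x where "x \<in> M \<inter> U" "y = \<Phi> x" using U(8) W_def by (metis IntI imageE)
    then show "\<iota> y \<in> M" using \<iota>\<Phi> by auto
  qed
  have MU_L: "\<And>x. x \<in> M \<Longrightarrow> x \<in> U \<Longrightarrow> \<Phi> x \<in> L" using U(8) by blast
  define q where "q = \<Phi> p"
  have qW: "q \<in> W" unfolding q_def W_def using U(2) by simp
  have \<iota>q: "\<iota> q = p" unfolding q_def using \<iota>\<Phi> U(2) by simp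
  have inv: "\<And>v. blinfun_apply (\<Phi>' p) (blinfun_apply (\<iota>' q) v) = v"
  proof -
    have "((\<Phi> \<circ> \<iota>) has_derivative (blinfun_apply (\<Phi>' p) \<circ> blinfun_apply (\<iota>' q))) (at q)"
      using diff_chain_at[OF \<iota>d[OF qW]] \<Phi>d[OF U(2)] \<iota>q by simp
    moreover have "((\<Phi> \<circ> \<iota>) has_derivative (\<lambda>x. x)) (at q)"
      by (rule has_derivative_transform_within_open[OF has_derivative_ident openW qW])
         (simp add: \<Phi>\<iota>)
    ultimately have "blinfun_apply (\<Phi>' p) \<circ> blinfun_apply (\<iota>' q) = (\<lambda>x. x)"
      using has_derivative_unique by blast
    then show "\<And>v. blinfun_apply (\<Phi>' p) (blinfun_apply (\<iota>' q) v) = v"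
      by (metis comp_apply)
  qed
  have derA: "K (blinfun_apply (\<iota>' (\<Phi> a)) v) = 0"
    if aM: "a \<in> M" and aU: "a \<in> U" and aV: "\<epsilon> > 0" "M \<inter> ball a \<epsilon> \<subseteq> V" and vL: "v \<in> L" for a \<epsilon> v
  proof -
    define ya where "ya = \<Phi> a"
    have yaW: "ya \<in> W" unfolding ya_def W_def using aU by simp
    have yaL: "ya \<in> L" unfolding ya_def using MU_L aM aU by simp
    have \<iota>ya: "\<iota> ya = a" unfolding ya_def using \<iota>\<Phi> aU by simp
    obtain \<rho>1 where \<rho>1: "\<rho>1 > 0" "ball ya \<rho>1 \<subseteq> W" using openW yaW open_contains_ball by blast
    obtain \<rho>2 where \<rho>2: "\<rho>2 > 0" "\<And>y. dist y ya < \<rho>2 \<Longrightarrow> dist (\<iota> y) (\<iota> ya) < \<epsilon>"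
      using \<iota>cont[OF yaW] aV(1) unfolding continuous_at_eps_delta by blast
    define \<rho> where "\<rho> = min \<rho>1 \<rho>2"
    have \<rho>: "\<rho> > 0" unfolding \<rho>_def using \<rho>1 \<rho>2 by simp
    have zero: "K (\<iota> y) = 0" if "y \<in> L" "dist y ya < \<rho>" for y
    proof -
      have "y \<in> W" using that \<rho>1(2) unfolding \<rho>_def by (auto simp: dist_commute)
      then have "\<iota> y \<in> M" using LW_M that by blast
      moreover have "dist (\<iota> y) a < \<epsilon>" using \<rho>2(2)[of y] that \<iota>ya unfolding \<rho>_def by simp
      ultimately have "\<iota> y \<in> V" using aV(2) by (auto simp: dist_commute)
      then show ?thesis using V_K by simp
    qed
    define h where "h = (\<lambda>t::real. K (\<iota> (ya + t *\<^sub>R v)))"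
    have "((\<lambda>t::real. ya + t *\<^sub>R v) has_derivative (\<lambda>t. t *\<^sub>R v)) (at 0)"
      by (auto intro!: derivative_eq_intros)
    moreover have "(\<iota> has_derivative blinfun_apply (\<iota>' ya)) (at (ya + 0 *\<^sub>R v))"
      using \<iota>d[OF yaW] by simp
    ultimately have "((\<iota> \<circ> (\<lambda>t::real. ya + t *\<^sub>R v)) has_derivative
        (blinfun_apply (\<iota>' ya) \<circ> (\<lambda>t. t *\<^sub>R v))) (at 0)"
      using diff_chain_at by blast
    then have d1: "(h has_derivative (\<lambda>t. K (blinfun_apply (\<iota>' ya) (t *\<^sub>R v)))) (at 0)"
      unfolding h_def using bounded_linear.has_derivative[OF blK] by (simp add: o_def)
    define r where "r = \<rho> / (norm v + 1)"
    have nv: "norm v + 1 > 0" using norm_ge_zero[of v] by linarith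
    have r: "r > 0" unfolding r_def using \<rho> nv by simp
    have eqs: "(0::real^'n::{finite,linorder}) = h t" if t: "t \<in> ball 0 r" for t :: real
    proof -
      have "norm (t *\<^sub>R v) = \<bar>t\<bar> * norm v" by simp
      also have "\<dots> \<le> \<bar>t\<bar> * (norm v + 1)" by (simp add: mult_left_mono)
      also have "\<dots> < r * (norm v + 1)"
        using t nv by (intro mult_strict_right_mono) auto
      also have "\<dots> = \<rho>" unfolding r_def using nv by simp
      finally have "dist (ya + t *\<^sub>R v) ya < \<rho>" by (simp add: dist_norm)
      moreover have "ya + t *\<^sub>R v \<in> L"
        using U(7) yaL vL by (simp add: subspace_add subspace_scale)
      ultimately show "0 = h t" unfolding h_def using zero by simp
    qed
    have c0: "((\<lambda>t::real. 0::real^'n::{finite,linorder}) has_derivative (\<lambda>t. 0)) (at 0)" by simp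
    have r0: "(0::real) \<in> ball 0 r" using r by simp
    have "(h has_derivative (\<lambda>t. 0)) (at 0)"
      by (rule has_derivative_transform_within_open[OF c0 open_ball r0 eqs])
    then have "(\<lambda>t. K (blinfun_apply (\<iota>' ya) (t *\<^sub>R v))) = (\<lambda>t. 0)"
      using d1 has_derivative_unique by blast
    then have "K (blinfun_apply (\<iota>' ya) (1 *\<^sub>R v)) = 0" by metis
    then show ?thesis unfolding ya_def by simp
  qed
  have pV: "p \<in> V"
  proof (rule closed_approachable[OF closedV, THEN iffD1], intro allI impI)
    fix e :: real assume "e > 0"
    then obtain a \<epsilon> where "a \<in> M" "dist a p < e" "\<epsilon> > 0" "M \<inter> ball a \<epsilon> \<subseteq> V"
      using appr V_def by blast
    then show "\<exists>y\<in>V. dist y p < e" by (intro bexI[of _ a]) auto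
  qed
  have \<iota>'V: "K (blinfun_apply (\<iota>' q) v) = 0" if vL: "v \<in> L" for v
  proof (rule ccontr)
    assume ne: "K (blinfun_apply (\<iota>' q) v) \<noteq> 0"
    have cf: "continuous_on W (\<lambda>y. K (blinfun_apply (\<iota>' y) v))"
      by (intro continuous_on_compose2[OF contK] continuous_intros \<iota>'cont) auto
    obtain r where r: "r > 0" "\<And>y. y \<in> W \<Longrightarrow> dist q y < r \<Longrightarrow> K (blinfun_apply (\<iota>' y) v) \<noteq> 0"
      using continuous_on_avoid[OF cf qW ne] by blast
    obtain s where s: "s > 0" "\<And>x. dist x p < s \<Longrightarrow> dist (\<Phi> x) (\<Phi> p) < r"
      using \<Phi>cont[OF U(2)] r(1) unfolding continuous_at_eps_delta by blast
    obtain s' where s': "s' > 0" "ball p s' \<subseteq> U" using U(1,2) open_contains_ball by blast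
    obtain a \<epsilon> where a: "a \<in> M" "dist a p < min s s'" "\<epsilon> > 0" "M \<inter> ball a \<epsilon> \<subseteq> V"
      using appr[of "min s s'"] s s' V_def by auto
    have aU: "a \<in> U" using a(2) s'(2) by (auto simp: dist_commute)
    have "\<Phi> a \<in> W" using aU W_def by simp
    moreover have "dist q (\<Phi> a) < r" using s(2)[of a] a(2) q_def by (simp add: dist_commute)
    ultimately have "K (blinfun_apply (\<iota>' (\<Phi> a)) v) \<noteq> 0" using r(2) by blast
    moreover have "K (blinfun_apply (\<iota>' (\<Phi> a)) v) = 0" using derA[OF a(1) aU a(3) a(4) vL] .
    ultimately show False by simp
  qed
  have blP: "bounded_linear (Pm \<sigma>)" using linear_Pm linear_conv_bounded_linear by blast
  define B where "B = (\<lambda>z. blinfun_apply (\<Phi>' p) (Pm \<sigma> z))"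
  have blB: "bounded_linear B" unfolding B_def
    by (rule bounded_linear_compose[OF blinfun.bounded_linear_right blP])
  define C where "C = (\<lambda>y. B (blinfun_apply (\<iota>' q) y))"
  have blC: "bounded_linear C" unfolding C_def
    by (rule bounded_linear_compose[OF blB blinfun.bounded_linear_right])
  have CL: "C y = y" if yL: "y \<in> L" for y
  proof -
    have "K (blinfun_apply (\<iota>' q) y) = 0" using \<iota>'V[OF yL] .
    then have "perm_act \<sigma> (blinfun_apply (\<iota>' q) y) = blinfun_apply (\<iota>' q) y" unfolding K_def by simp
    then have "Pm \<sigma> (blinfun_apply (\<iota>' q) y) = blinfun_apply (\<iota>' q) y" using Pm_fix[OF sp] by blast
    then show ?thesis unfolding C_def B_def using inv by simp
  qed
  define F where "F = (\<lambda>y. B (\<iota> y) + (y - C y))"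
  define F' where "F' = (\<lambda>y w. B (blinfun_apply (\<iota>' y) w) + (w - C w))"
  have Fd: "(F has_derivative F' y) (at y)" if yW: "y \<in> W" for y
  proof -
    have d1: "((\<lambda>y. B (\<iota> y)) has_derivative (\<lambda>w. B (blinfun_apply (\<iota>' y) w))) (at y)"
      using bounded_linear.has_derivative[OF blB \<iota>d[OF yW]] .
    have d2: "(C has_derivative C) (at y)" using bounded_linear_imp_has_derivative[OF blC] .
    have d3: "((\<lambda>y. y - C y) has_derivative (\<lambda>w. w - C w)) (at y)"
      using has_derivative_diff[OF has_derivative_ident d2] .
    show ?thesis unfolding F_def F'_def using has_derivative_add[OF d1 d3] .
  qed
  have F'q: "F' q = (\<lambda>w. w)" unfolding F'_def C_def by simp
  obtain KB where KB: "KB > 0" "\<And>z. norm (B z) \<le> norm z * KB"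
    using bounded_linear.pos_bounded[OF blB] by blast
  have oncond: "\<exists>d>0. \<forall>x. dist q x < d \<longrightarrow> onorm (\<lambda>v. F' x v - F' q v) < e" if e: "e > 0" for e
  proof -
    obtain d1 where d1: "d1 > 0" "\<And>x'. x' \<in> W \<Longrightarrow> dist x' q < d1 \<Longrightarrow> dist (\<iota>' x') (\<iota>' q) < e / (2 * KB)"
      using \<iota>'cont qW e KB(1) unfolding continuous_on_iff
      by (metis divide_pos_pos mult_pos_pos zero_less_numeral)
    obtain d2 where d2: "d2 > 0" "ball q d2 \<subseteq> W" using openW qW open_contains_ball by blast
    define d where "d = min d1 d2"
    have "onorm (\<lambda>v. F' x v - F' q v) < e" if dx: "dist q x < d" for x
    proof -
      have xW: "x \<in> W" using dx d2 unfolding d_def by auto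
      have nd: "norm (\<iota>' x - \<iota>' q) < e / (2 * KB)"
        using d1(2)[OF xW] dx unfolding d_def by (simp add: dist_norm norm_minus_commute)
      have eqv: "F' x v - F' q v = B (blinfun_apply (\<iota>' x - \<iota>' q) v)" for v
        unfolding F'_def by (simp add: blinfun.diff_left linear_diff[OF bounded_linear.linear[OF blB]])
      have "norm (F' x v - F' q v) \<le> (KB * norm (\<iota>' x - \<iota>' q)) * norm v" for v
      proof -
        have "norm (F' x v - F' q v) \<le> norm (blinfun_apply (\<iota>' x - \<iota>' q) v) * KB"
          unfolding eqv using KB(2) .
        also have "\<dots> \<le> (norm (\<iota>' x - \<iota>' q) * norm v) * KB"
          using KB(1) norm_blinfun by (intro mult_right_mono) auto
        finally show ?thesis by (simp add: ac_simps)
      qed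
      then have "onorm (\<lambda>v. F' x v - F' q v) \<le> KB * norm (\<iota>' x - \<iota>' q)"
        by (rule onorm_le)
      also have "\<dots> < KB * (e / (2 * KB))" using mult_strict_left_mono[OF nd KB(1)] .
      also have "\<dots> = e / 2" using KB(1) by simp
      finally show ?thesis using e by simp
    qed
    moreover have "d > 0" unfolding d_def using d1 d2 by simp
    ultimately show ?thesis by blast
  qed
  have gid: "(\<lambda>x. x) \<circ> F' q = id" unfolding F'q by (simp add: id_def o_def)
  obtain r where r: "r > 0" "ball q r \<subseteq> W" "inj_on F (ball q r)"
    using has_derivative_locally_injective[OF qW openW bounded_linear_ident gid Fd oncond] by blast
  have "\<forall>x\<in>M. \<exists>\<delta>>0. \<forall>y\<in>M \<inter> ball x \<delta>. \<forall>\<tau>. \<tau> permutes UNIV \<and> perm_act \<tau> y = y \<longrightarrow>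
        perm_act \<tau> ` (M \<inter> ball x \<delta>) = M \<inter> ball x \<delta>"
    using LS unfolding locally_symmetric_def by (rule conjunct2)
  from bspec[OF this pM] obtain \<delta>p where \<delta>p: "\<delta>p > 0"
    "\<forall>y\<in>M \<inter> ball p \<delta>p. \<forall>\<tau>. \<tau> permutes UNIV \<and> perm_act \<tau> y = y \<longrightarrow>
        perm_act \<tau> ` (M \<inter> ball p \<delta>p) = M \<inter> ball p \<delta>p" by blast
  have pfix: "perm_act \<sigma> p = p" using pV V_def by simp
  have pin: "p \<in> M \<inter> ball p \<delta>p" using pM \<delta>p(1) by simp
  have symp: "perm_act \<sigma> ` (M \<inter> ball p \<delta>p) = M \<inter> ball p \<delta>p"
    using \<delta>p(2)[rule_format, OF pin] sp pfix by blast
  obtain s where s: "s > 0" "\<And>x. dist x p < s \<Longrightarrow> dist (\<Phi> x) (\<Phi> p) < r"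
    using \<Phi>cont[OF U(2)] r(1) unfolding continuous_at_eps_delta by blast
  obtain s' where s': "s' > 0" "ball p s' \<subseteq> U" using U(1,2) open_contains_ball by blast
  define \<epsilon> where "\<epsilon> = min \<delta>p (min s s')"
  have FL: "F (\<Phi> x) = B x" if "x \<in> M" "x \<in> U" for x
  proof -
    have "\<Phi> x \<in> L" using MU_L that by blast
    then show ?thesis unfolding F_def using CL \<iota>\<Phi> that by simp
  qed
  have "M \<inter> ball p \<epsilon> \<subseteq> V"
  proof
    fix x assume x: "x \<in> M \<inter> ball p \<epsilon>"
    define x' where "x' = perm_act \<sigma> x"
    have xb: "x \<in> M \<inter> ball p \<delta>p" using x by (auto simp: \<epsilon>_def)
    then have x'M: "x' \<in> M \<inter> ball p \<delta>p" using symp unfolding x'_def by blast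
    have "dist p x' = norm (perm_act \<sigma> p - perm_act \<sigma> x)" unfolding x'_def using pfix by (simp add: dist_norm)
    also have "\<dots> = norm (perm_act \<sigma> (p - x))" using linear_diff[OF linear_perm_act] by metis
    also have "\<dots> = dist p x" using norm_perm_act[OF sp] by (simp add: dist_norm)
    finally have dx': "dist p x' = dist p x" .
    have dxe: "dist p x < \<epsilon>" using x by simp
    have xU: "x \<in> U" using dxe s'(2) unfolding \<epsilon>_def by auto
    have x'U: "x' \<in> U" using dxe dx' s'(2) unfolding \<epsilon>_def by auto
    have b1: "\<Phi> x \<in> ball q r" using s(2)[of x] dxe unfolding \<epsilon>_def q_def by (simp add: dist_commute)
    have b2: "\<Phi> x' \<in> ball q r" using s(2)[of x'] dxe dx' unfolding \<epsilon>_def q_def by (simp add: dist_commute)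
    have "F (\<Phi> x') = B x'" using FL x'M x'U by blast
    also have "\<dots> = B x" unfolding B_def x'_def using Pm_perm[OF sp] by simp
    also have "\<dots> = F (\<Phi> x)" using FL x xU by simp
    finally have "\<Phi> x' = \<Phi> x" using r(3) b1 b2 by (meson inj_onD)
    then have "x' = x" using U(3) xU x'U by (meson inj_onD)
    then show "x \<in> V" unfolding V_def x'_def by simp
  qed
  moreover have "\<epsilon> > 0" unfolding \<epsilon>_def using \<delta>p(1) s(1) s'(1) by simp
  ultimately show ?thesis unfolding V_def by blast
qed



lemma V_orb_const:
  fixes \<sigma> :: "'n::finite \<Rightarrow> 'n"
  assumes sp: "\<sigma> permutes UNIV" and z: "perm_act \<sigma> z = z" and i: "i \<in> orb \<sigma> a" and j: "j \<in> orb \<sigma> a"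
  shows "z $ i = z $ j"
proof -
  have "z \<in> Delta_perpperp \<sigma>" using Delta_perpperp_iff[OF sp] z by blast
  then have h: "\<forall>B\<in>orbit_partition \<sigma>. \<forall>i\<in>B. \<forall>j\<in>B. z $ i = z $ j"
    unfolding Delta_perpperp_def by (rule CollectD)
  have "orb \<sigma> a \<in> orbit_partition \<sigma>" unfolding orbit_partition_orb by (rule rangeI)
  then show ?thesis using h i j by blast
qed

lemma Delta_sub_V:
  fixes \<sigma> :: "'n::finite \<Rightarrow> 'n"
  assumes sp: "\<sigma> permutes UNIV" and x: "x \<in> Delta \<sigma>"
  shows "perm_act \<sigma> x = x"
proof -
  have cp: "coord_partition x = orbit_partition \<sigma>" using x unfolding Delta_def by simp
  have "x \<in> Delta_perpperp \<sigma>" unfolding Delta_perpperp_def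
  proof (intro CollectI ballI)
    fix B i j assume B: "B \<in> orbit_partition \<sigma>" and "i \<in> B" "j \<in> B"
    then obtain l where "B = {k. x $ k = x $ l}" using cp unfolding coord_partition_def by auto
    then show "x $ i = x $ j" using \<open>i \<in> B\<close> \<open>j \<in> B\<close> by simp
  qed
  then show ?thesis using Delta_perpperp_iff[OF sp] by blast
qed

lemma part2:
  fixes M :: "(real^'n::{finite,linorder}) set" and \<sigma> \<sigma>' :: "'n::{finite,linorder} \<Rightarrow> 'n"
  assumes LS: "locally_symmetric M" and conM: "connected M" and sp: "\<sigma> permutes UNIV"
    and MV: "M \<subseteq> {x. perm_act \<sigma> x = x}" and xbM: "xbar \<in> M" and xbD: "xbar \<in> Delta \<sigma>"
    and xM: "x \<in> M" and ms: "perm_much_smaller \<sigma>' \<sigma>" and xD: "x \<in> Delta \<sigma>'"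
  shows False
proof -
  obtain B C A0 where B: "B \<in> orbit_partition \<sigma>'" and C: "C \<subseteq> orbit_partition \<sigma>" "B = \<Union>C"
    "card C \<ge> 2" and A0: "A0 \<in> C" "card A0 \<ge> 2"
    using ms unfolding perm_much_smaller_def by blast
  obtain a where a: "A0 = orb \<sigma> a" using A0(1) C(1) unfolding orbit_partition_orb by blast
  obtain O2 where O2: "O2 \<in> C" "O2 \<noteq> A0"
  proof (rule ccontr)
    assume "\<not> thesis"
    then have "C \<subseteq> {A0}" using that by blast
    then have "card C \<le> card {A0}" by (intro card_mono) auto
    then show False using C(3) by simp
  qed
  obtain b where b: "O2 = orb \<sigma> b" using O2(1) C(1) unfolding orbit_partition_orb by blast
  define j where "j = b"
  have jO2: "j \<in> O2" unfolding j_def b by (rule orb_self)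
  have jA0: "j \<notin> A0"
  proof
    assume "j \<in> A0"
    then have "orb \<sigma> b = orb \<sigma> a" using orb_eq[OF sp] a j_def by blast
    then show False using O2(2) a b by simp
  qed
  have finA0: "finite A0" by simp
  obtain i i' where ii: "i \<in> A0" "i' \<in> A0" "i \<noteq> i'"
  proof (rule ccontr)
    assume "\<not> thesis"
    then have "\<forall>a1\<in>A0. \<forall>a2\<in>A0. a1 = a2" using that by blast
    then have "card A0 \<le> Suc 0" using card_le_Suc0_iff_eq[OF finA0] by blast
    then show False using A0(2) by simp
  qed
  have i'j: "i' \<noteq> j" using ii(2) jA0 by blast
  have ij: "i \<noteq> j" using ii(1) jA0 by blast
  have xij: "x $ i = x $ j"
  proof -
    have "B \<in> coord_partition x" using B xD unfolding Delta_def by simp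
    then obtain l where l: "B = {k. x $ k = x $ l}" unfolding coord_partition_def by auto
    have "i \<in> B" "j \<in> B" using C(2) A0(1) ii(1) O2(1) jO2 by blast+
    then show ?thesis using l by simp
  qed
  have xbij: "xbar $ i \<noteq> xbar $ j"
  proof
    assume eq: "xbar $ i = xbar $ j"
    have "{k. xbar $ k = xbar $ i} \<in> coord_partition xbar" unfolding coord_partition_def by auto
    then have "{k. xbar $ k = xbar $ i} \<in> range (orb \<sigma>)"
      using xbD unfolding Delta_def orbit_partition_orb by simp
    then obtain c where c: "{k. xbar $ k = xbar $ i} = orb \<sigma> c" by blast
    have "i \<in> orb \<sigma> c" using c by blast
    then have "orb \<sigma> i = orb \<sigma> c" by (rule orb_eq[OF sp])
    moreover have "orb \<sigma> i = A0" using orb_eq[OF sp, of i a] a ii(1) by simp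
    moreover have "j \<in> orb \<sigma> c"
    proof -
      have "j \<in> {k. xbar $ k = xbar $ i}" using eq by simp
      then show ?thesis using c by simp
    qed
    ultimately show False using jA0 by simp
  qed
  define \<tau> where "\<tau> = Transposition.transpose i j"
  have tp: "\<tau> permutes UNIV" unfolding \<tau>_def by (rule permutes_swap_id) auto
  have tact: "perm_act \<tau> z $ k = z $ (\<tau> k)" for z :: "real^'n::{finite,linorder}" and k
    unfolding perm_act_def \<tau>_def by simp
  define E where "E = M \<inter> {z. z $ i = z $ j}"
  have openE: "openin (top_of_set M) E" unfolding openin_euclidean_subtopology_iff
  proof (intro conjI ballI)
    show "E \<subseteq> M" unfolding E_def by blast
    fix y assume yE: "y \<in> E"
    have "\<forall>x\<in>M. \<exists>\<delta>>0. \<forall>y\<in>M \<inter> ball x \<delta>. \<forall>\<tau>. \<tau> permutes UNIV \<and> perm_act \<tau> y = y \<longrightarrow>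
        perm_act \<tau> ` (M \<inter> ball x \<delta>) = M \<inter> ball x \<delta>"
      using LS unfolding locally_symmetric_def by (rule conjunct2)
    from bspec[OF this, of y] obtain \<delta> where \<delta>: "\<delta> > 0"
      "\<forall>y'\<in>M \<inter> ball y \<delta>. \<forall>\<tau>. \<tau> permutes UNIV \<and> perm_act \<tau> y' = y' \<longrightarrow>
        perm_act \<tau> ` (M \<inter> ball y \<delta>) = M \<inter> ball y \<delta>" using yE E_def by blast
    have yfix: "perm_act \<tau> y = y"
    proof -
      have "y $ (\<tau> k) = y $ k" for k using yE unfolding E_def \<tau>_def
        by (cases "k = i"; cases "k = j") auto
      then show ?thesis unfolding vec_eq_iff using tact by simp
    qed
    have yin: "y \<in> M \<inter> ball y \<delta>" using yE \<delta>(1) unfolding E_def by simp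
    have symy: "perm_act \<tau> ` (M \<inter> ball y \<delta>) = M \<inter> ball y \<delta>"
      using \<delta>(2)[rule_format, OF yin] tp yfix by blast
    show "\<exists>e>0. \<forall>x'\<in>M. dist x' y < e \<longrightarrow> x' \<in> E"
    proof (intro exI[of _ \<delta>] conjI ballI impI)
      show "\<delta> > 0" by (rule \<delta>(1))
      fix z assume zM: "z \<in> M" and dz: "dist z y < \<delta>"
      have "z \<in> M \<inter> ball y \<delta>" using zM dz by (simp add: dist_commute)
      then have "perm_act \<tau> z \<in> M" using symy by blast
      then have tz: "perm_act \<sigma> (perm_act \<tau> z) = perm_act \<tau> z" using MV by blast
      have "perm_act \<tau> z $ i = perm_act \<tau> z $ i'"
        using V_orb_const[OF sp tz] ii a by blast
      then have "z $ j = z $ i'" using ii(3) i'j ij by (simp add: \<tau>_def perm_act_def)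
      moreover have "z $ i' = z $ i" using V_orb_const[OF sp] MV zM ii a by blast
      ultimately show "z \<in> E" unfolding E_def using zM by simp
    qed
  qed
  have closedE: "closedin (top_of_set M) E" unfolding E_def
    by (intro closedin_closed_Int closed_Collect_eq continuous_intros)
  have "E = {} \<or> E = M" using conM openE closedE unfolding connected_clopen by blast
  moreover have "x \<in> E" unfolding E_def using xM xij by simp
  ultimately have "xbar \<in> E" using xbM by blast
  then show False unfolding E_def using xbij by simp
qed

theorem corollary3p21:
  fixes M :: "(real^'n::{finite,linorder}) set"
    and xbar :: "real^'n::{finite,linorder}" and \<sigma> :: "'n::{finite,linorder} \<Rightarrow> 'n" and \<delta> :: real
  assumes "locally_symmetric_C2_submanifold M"
    and "xbar \<in> M" and "\<sigma> permutes UNIV" and "\<delta> > 0"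
    and "M \<inter> ball xbar \<delta> \<subseteq> Delta \<sigma>"
  shows "M \<subseteq> Delta_perpperp \<sigma> -
           (\<Union>{Delta \<sigma>' | \<sigma>'. \<sigma>' permutes UNIV \<and> perm_much_smaller \<sigma>' \<sigma>})"
proof -
  note sp = assms(3)
  define V where "V = {x. perm_act \<sigma> x = x}"
  have C2: "C2_submanifold M" and LS: "locally_symmetric M"
    using assms(1) unfolding locally_symmetric_C2_submanifold_def by auto
  have conM: "connected M" using C2 unfolding C2_submanifold_def by (rule conjunct1)
  have DV: "Delta \<sigma> \<subseteq> V" unfolding V_def using Delta_sub_V[OF sp] by blast
  define A where "A = {x\<in>M. \<exists>\<epsilon>>0. M \<inter> ball x \<epsilon> \<subseteq> V}"
  have openA: "openin (top_of_set M) A" unfolding openin_euclidean_subtopology_iff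
  proof (intro conjI ballI)
    show "A \<subseteq> M" unfolding A_def by blast
    fix x assume "x \<in> A"
    then obtain \<epsilon> where \<epsilon>: "\<epsilon> > 0" "M \<inter> ball x \<epsilon> \<subseteq> V" unfolding A_def by blast
    show "\<exists>e>0. \<forall>x'\<in>M. dist x' x < e \<longrightarrow> x' \<in> A"
    proof (intro exI[of _ \<epsilon>] conjI ballI impI)
      show "\<epsilon> > 0" by (rule \<epsilon>(1))
      fix x' assume x'M: "x' \<in> M" and d: "dist x' x < \<epsilon>"
      have "ball x' (\<epsilon> - dist x' x) \<subseteq> ball x \<epsilon>"
        by (auto simp: dist_commute intro: dist_triangle_lt[of x' x _ \<epsilon>] elim!: ballE)
          (smt (verit) dist_commute dist_triangle)
      then have "M \<inter> ball x' (\<epsilon> - dist x' x) \<subseteq> V" using \<epsilon>(2) by blast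
      moreover have "\<epsilon> - dist x' x > 0" using d by simp
      ultimately show "x' \<in> A" unfolding A_def using x'M by blast
    qed
  qed
  have closedA: "closedin (top_of_set M) A" unfolding closedin_def
  proof (intro conjI)
    show "A \<subseteq> topspace (top_of_set M)" unfolding A_def by auto
    show "openin (top_of_set M) (topspace (top_of_set M) - A)"
      unfolding topspace_euclidean_subtopology openin_euclidean_subtopology_iff
    proof (intro conjI ballI)
      show "M - A \<subseteq> M" by blast
      fix p assume p: "p \<in> M - A"
      show "\<exists>e>0. \<forall>x'\<in>M. dist x' p < e \<longrightarrow> x' \<in> M - A"
      proof (rule ccontr)
        assume "\<not> ?thesis"
        then have "\<And>e. e > 0 \<Longrightarrow> \<exists>a\<in>M. dist a p < e \<and> (\<exists>\<epsilon>>0. M \<inter> ball a \<epsilon> \<subseteq> {x. perm_act \<sigma> x = x})"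
          unfolding A_def V_def by blast
        then have "\<exists>\<epsilon>>0. M \<inter> ball p \<epsilon> \<subseteq> {x. perm_act \<sigma> x = x}"
          using core[OF C2 LS sp] p by blast
        then have "p \<in> A" unfolding A_def V_def using p by blast
        then show False using p by blast
      qed
    qed
  qed
  have xA: "xbar \<in> A" unfolding A_def using assms(2,4,5) DV by blast
  have "A = {} \<or> A = M" using conM openA closedA unfolding connected_clopen by blast
  then have AM: "A = M" using xA by blast
  have MV: "M \<subseteq> V"
  proof
    fix x assume "x \<in> M"
    then obtain \<epsilon> where "\<epsilon> > 0" "M \<inter> ball x \<epsilon> \<subseteq> V" using AM unfolding A_def by blast
    then show "x \<in> V" using \<open>x \<in> M\<close> by auto
  qed
  have xbD: "xbar \<in> Delta \<sigma>" using assms(2,4,5) by auto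
  show ?thesis
  proof
    fix x assume xM: "x \<in> M"
    have "x \<in> Delta_perpperp \<sigma>" using Delta_perpperp_iff[OF sp] MV xM V_def by blast
    moreover have "x \<notin> \<Union>{Delta \<sigma>' | \<sigma>'. \<sigma>' permutes UNIV \<and> perm_much_smaller \<sigma>' \<sigma>}"
    proof
      assume "x \<in> \<Union>{Delta \<sigma>' | \<sigma>'. \<sigma>' permutes UNIV \<and> perm_much_smaller \<sigma>' \<sigma>}"
      then obtain \<sigma>' where "perm_much_smaller \<sigma>' \<sigma>" "x \<in> Delta \<sigma>'" by blast
      then show False using part2[OF LS conM sp _ assms(2) xbD xM] MV V_def by blast
    qed
    ultimately show "x \<in> Delta_perpperp \<sigma> - \<Union>{Delta \<sigma>' | \<sigma>'. \<sigma>' permutes UNIV \<and> perm_much_smaller \<sigma>' \<sigma>}" by blast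
  qed
qed

end
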